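(* Let $H$, $G$ be real Hilbert spaces, $Z$ a nonempty closed convex subset of $H\times G$, $x_0\in H\times G$, $\{\lambda_n\}\subset(0,1]$, $\{H_n\}$ closed convex sets with $Z\subset H_n$, and let $\{x_n\}$ be generated by $x_{n+1/2}=x_n+\lambda_n(P_{H_n}(x_n)-x_n)$, $x_{n+1}=P_{H(x_0,x_n)\cap C_n}(x_0)$, where each $C_n$ is closed convex with $Z\subset C_n\subset H(x_n,x_{n+1/2})$. Let $\bar x=P_Z(x_0)$, $w=\tfrac12(x_0+\bar x)$, $r=\|w-x_0\|$ and $b_n:=4r^2-\|x_n-x_0\|^2$. Then: (i) $\|w-x_n\|\le\tfrac12\|x_0-\bar x\|$ for all $n$; (ii) $b_n\ge0$ and $\|x_n-\bar x\|^2\le b_n$ for all $n$; (iii) if $x_n\in H(x_0,x_{n-1})$ for all $n\ge1$, then $\{b_n\}$ is nonincreasing; moreover, if for some $n\ge1$ we have $x_{n-1}\neq x_n$, then $\|\bar x-x_n\|^2<\|x_0-\bar x\|^2-\|x_0-x_{n-1}\|^2$ and $b_n<b_{n-1}$.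
   Context: For $x,y\in H\times G$, $H(x,y):=\{h:\ \langle h-y\mid x-y\rangle\le 0\}$. $P_D$ is the metric projection onto a nonempty closed convex set $D$. *)

theory Defs
  imports "HOL-Analysis.Analysis"
begin

definition halfsp :: "'a::real_inner \<Rightarrow> 'a \<Rightarrow> 'a set" where
  "halfsp x y = {h. inner (h - y) (x - y) \<le> 0}"

text \<open>Same definition as the library's closest_point,
  which however is restricted to heine_borel (finite-dimensional) spaces.\<close>
definition proj :: "'a::real_inner set \<Rightarrow> 'a \<Rightarrow> 'a" where
  "proj D x = (SOME p. p \<in> D \<and> (\<forall>y\<in>D. dist x p \<le> dist x y))"

end

theory Submission
  imports Defs
begin

lemma infdist_approx:
  assumes "A \<noteq> {}" "infdist x A < t"
  shows "\<exists>a\<in>A. dist x a < t"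
proof -
  have "bdd_below ((\<lambda>a. dist x a) ` A)" by (rule bdd_belowI[of _ 0]) auto
  then show ?thesis using assms by (simp add: infdist_notempty cINF_less_iff)
qed

lemma parallelogram:
  fixes x a b :: "'a::real_inner"
  shows "(norm (a - b))\<^sup>2 = 2 * (norm (x - a))\<^sup>2 + 2 * (norm (x - b))\<^sup>2 - 4 * (norm (x - (1/2) *\<^sub>R (a + b)))\<^sup>2"
  by (simp add: power2_norm_eq_inner inner_diff_left inner_diff_right inner_add_left inner_add_right inner_commute algebra_simps)

lemma proj_exists:
  fixes D :: "'a::{real_inner,complete_space} set"
  assumes ne: "D \<noteq> {}" and cl: "closed D" and cv: "convex D"
  shows "\<exists>p\<in>D. \<forall>y\<in>D. dist x p \<le> dist x y"
proof -
  define d where "d = infdist x D"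
  have d0: "d \<ge> 0" unfolding d_def by (rule infdist_nonneg)
  have "\<forall>k::nat. \<exists>y\<in>D. dist x y < d + 1 / (real k + 1)"
  proof
    fix k :: nat
    have "infdist x D < d + 1 / (real k + 1)" unfolding d_def by simp
    then show "\<exists>y\<in>D. dist x y < d + 1 / (real k + 1)" using infdist_approx[OF ne] by blast
  qed
  then obtain Y where YD: "\<And>k. Y k \<in> D" and Yd: "\<And>k. dist x (Y k) < d + 1 / (real k + 1)"
    by metis
  have dle: "\<And>y. y \<in> D \<Longrightarrow> d \<le> dist x y" unfolding d_def by (rule infdist_le)
  have Ydist: "(norm (Y k - Y m))\<^sup>2 \<le> 8 * d * e + 4 * e\<^sup>2"
    if "dist x (Y k) \<le> d + e" "dist x (Y m) \<le> d + e" "e \<ge> 0" for k m e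
  proof -
    have mid: "(1/2) *\<^sub>R (Y k + Y m) \<in> D"
      using convexD[OF cv YD[of k] YD[of m], of "1/2" "1/2"] by (simp add: scaleR_add_right)
    have "d \<le> norm (x - (1/2) *\<^sub>R (Y k + Y m))" using dle[OF mid] by (simp add: dist_norm)
    then have a: "d\<^sup>2 \<le> (norm (x - (1/2) *\<^sub>R (Y k + Y m)))\<^sup>2" using d0 by (simp add: power_mono)
    have b: "(norm (x - Y k))\<^sup>2 \<le> (d + e)\<^sup>2" using that d0 by (simp add: dist_norm power_mono)
    have c: "(norm (x - Y m))\<^sup>2 \<le> (d + e)\<^sup>2" using that d0 by (simp add: dist_norm power_mono)
    show ?thesis using parallelogram[of "Y k" "Y m" x] a b c by (simp add: power2_eq_square algebra_simps)
  qed
  have "Cauchy Y"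
  proof (rule metric_CauchyI)
    fix \<epsilon> :: real assume "\<epsilon> > 0"
    define t where "t = min 1 (\<epsilon>\<^sup>2 / (8 * d + 4))"
    have t0: "t > 0" unfolding t_def using \<open>\<epsilon> > 0\<close> d0 by simp
    obtain M where M: "inverse (real (Suc M)) < t" using reals_Archimedean[OF t0] by blast
    define e where "e = 1 / (real M + 1)"
    have e0: "e > 0" "e < t" using M unfolding e_def by (auto simp: field_simps)
    have et: "8 * d * e + 4 * e\<^sup>2 < \<epsilon>\<^sup>2"
    proof -
      have "e \<le> 1" using e0 unfolding t_def by simp
      then have "e\<^sup>2 \<le> e" using e0 unfolding power2_eq_square by (simp add: mult_left_le)
      then have "8 * d * e + 4 * e\<^sup>2 \<le> (8 * d + 4) * e" by (simp add: algebra_simps)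
      also have "\<dots> < (8 * d + 4) * (\<epsilon>\<^sup>2 / (8 * d + 4))"
        using e0 d0 unfolding t_def by (intro mult_strict_left_mono) auto
      also have "\<dots> = \<epsilon>\<^sup>2" using d0 by simp
      finally show ?thesis .
    qed
    have bnd: "dist x (Y k) \<le> d + e" if "k \<ge> M" for k
    proof -
      have "1 / (real k + 1) \<le> e" unfolding e_def using that by (simp add: frac_le)
      then show ?thesis using Yd[of k] by simp
    qed
    show "\<exists>M. \<forall>m\<ge>M. \<forall>n\<ge>M. dist (Y m) (Y n) < \<epsilon>"
    proof (intro exI allI impI)
      fix m n assume "m \<ge> M" "n \<ge> M"
      then have "(dist (Y m) (Y n))\<^sup>2 < \<epsilon>\<^sup>2"
        using Ydist[OF bnd[of m] bnd[of n]] e0 et by (simp add: dist_norm)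
      then show "dist (Y m) (Y n) < \<epsilon>" using \<open>\<epsilon> > 0\<close>
        by (meson power2_less_imp_less less_imp_le)
    qed
  qed
  then obtain p where lim: "Y \<longlonglongrightarrow> p" using Cauchy_convergent_iff convergent_def by blast
  have pD: "p \<in> D" using closed_sequentially[OF cl] YD lim by blast
  have "(\<lambda>k. dist x (Y k)) \<longlonglongrightarrow> dist x p" by (intro tendsto_intros lim)
  moreover have "(\<lambda>k. d + 1 / (real k + 1)) \<longlonglongrightarrow> d + 0"
  proof (intro tendsto_intros)
    show "(\<lambda>k. 1 / (real k + 1)) \<longlonglongrightarrow> 0"
      using LIMSEQ_inverse_real_of_nat by (simp add: divide_inverse add.commute)
  qed
  ultimately have "dist x p \<le> d"
    using Yd by (intro LIMSEQ_le[where X="\<lambda>k. dist x (Y k)"]) (auto intro: less_imp_le)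
  then show ?thesis using pD dle by (meson order_trans)
qed


lemma proj_props:
  fixes D :: "'a::{real_inner,complete_space} set"
  assumes "D \<noteq> {}" "closed D" "convex D"
  shows "proj D y \<in> D \<and> (\<forall>z\<in>D. inner (z - proj D y) (y - proj D y) \<le> 0)"
proof -
  have P: "proj D y \<in> D \<and> (\<forall>z\<in>D. dist y (proj D y) \<le> dist y z)"
    unfolding proj_def using proj_exists[OF assms, of y] by - (rule someI_ex, blast)
  show ?thesis using P any_closest_point_dot[OF assms(3,2)] by (simp add: inner_commute)
qed

lemma halfsp_eq: "halfsp x y = {h. inner (x - y) h \<le> inner (x - y) y}"
  by (auto simp: halfsp_def inner_diff_left inner_commute)

lemma halfsp_closed: "closed (halfsp x y)"
  unfolding halfsp_eq by (rule closed_halfspace_le)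

lemma halfsp_convex: "convex (halfsp x y)"
  unfolding halfsp_eq by (rule convex_halfspace_le)

lemma ball_ident:
  fixes a c :: "'a::real_inner"
  shows "(norm ((1/2) *\<^sub>R (a + c) - x))\<^sup>2 = (1/4) * (norm (a - c))\<^sup>2 + inner (c - x) (a - x)"
  by (simp add: power2_norm_eq_inner inner_diff_left inner_diff_right inner_add_left inner_add_right inner_commute algebra_simps)

lemma three_ident:
  fixes a c :: "'a::real_inner"
  shows "(norm (a - c))\<^sup>2 = (norm (a - x))\<^sup>2 + (norm (c - x))\<^sup>2 - 2 * inner (c - x) (a - x)"
  by (simp add: power2_norm_eq_inner inner_diff_left inner_diff_right inner_commute algebra_simps)

theorem proposition12:
  fixes Z :: "('h::{real_inner,complete_space} \<times> 'g::{real_inner,complete_space}) set"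
    and x0 :: "'h \<times> 'g"
    and x xh :: "nat \<Rightarrow> 'h \<times> 'g"
    and lam :: "nat \<Rightarrow> real"
    and Hn Cn :: "nat \<Rightarrow> ('h \<times> 'g) set"
    and xbar w :: "'h \<times> 'g"
    and r :: real and b :: "nat \<Rightarrow> real"
  assumes Z: "Z \<noteq> {}" "closed Z" "convex Z"
    and lam: "\<And>n. 0 < lam n \<and> lam n \<le> 1"
    and Hn: "\<And>n. closed (Hn n) \<and> convex (Hn n) \<and> Z \<subseteq> Hn n"
    and Cn: "\<And>n. closed (Cn n) \<and> convex (Cn n) \<and> Z \<subseteq> Cn n \<and> Cn n \<subseteq> halfsp (x n) (xh n)"
    and x_0: "x 0 = x0"
    and xh_def: "\<And>n. xh n = x n + lam n *\<^sub>R (proj (Hn n) (x n) - x n)"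
    and x_Suc: "\<And>n. x (Suc n) = proj (halfsp x0 (x n) \<inter> Cn n) x0"
  defines "xbar \<equiv> proj Z x0"
    and "w \<equiv> (1/2) *\<^sub>R (x0 + xbar)"
    and "r \<equiv> norm (w - x0)"
    and "b \<equiv> (\<lambda>n. 4 * r\<^sup>2 - (norm (x n - x0))\<^sup>2)"
  shows "(\<forall>n. norm (w - x n) \<le> (1/2) * norm (x0 - xbar))
    \<and> (\<forall>n. b n \<ge> 0 \<and> (norm (x n - xbar))\<^sup>2 \<le> b n)
    \<and> ((\<forall>n\<ge>1. x n \<in> halfsp x0 (x (n - 1))) \<longrightarrow>
         ((\<forall>n. b (Suc n) \<le> b n) \<and>
          (\<forall>n\<ge>1. x (n - 1) \<noteq> x n \<longrightarrow>
              (norm (xbar - x n))\<^sup>2 < (norm (x0 - xbar))\<^sup>2 - (norm (x0 - x (n - 1)))\<^sup>2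
              \<and> b n < b (n - 1))))"
proof -
  have inv: "Z \<subseteq> halfsp x0 (x n)" for n
  proof (induction n)
    case 0
    then show ?case by (auto simp: halfsp_def x_0)
  next
    case (Suc n)
    define D where "D = halfsp x0 (x n) \<inter> Cn n"
    have ZD: "Z \<subseteq> D" unfolding D_def using Suc Cn[of n] by blast
    have "D \<noteq> {}" using ZD Z(1) by blast
    moreover have "closed D" unfolding D_def using Cn[of n] halfsp_closed by (intro closed_Int) auto
    moreover have "convex D" unfolding D_def using Cn[of n] halfsp_convex by (intro convex_Int) auto
    ultimately have Dp: "D \<noteq> {}" "closed D" "convex D" by auto
    have xs: "x (Suc n) = proj D x0" unfolding D_def x_Suc ..
    from proj_props[OF Dp, of x0] ZD show ?case
      unfolding xs by (auto simp: halfsp_def)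
  qed
  have xbarZ: "xbar \<in> Z" unfolding xbar_def using proj_props[OF Z] by blast
  have key: "inner (xbar - x n) (x0 - x n) \<le> 0" for n
    using inv[of n] xbarZ by (auto simp: halfsp_def)
  have wx0: "w - x0 = (1/2) *\<^sub>R (xbar - x0)" unfolding w_def by (simp add: algebra_simps flip: scaleR_add_left)
  have r2: "4 * r\<^sup>2 = (norm (x0 - xbar))\<^sup>2"
    unfolding r_def wx0 by (simp add: power2_eq_square norm_minus_commute)
  have bn: "b n = (norm (x0 - xbar))\<^sup>2 - (norm (x n - x0))\<^sup>2" for n
    unfolding b_def r2 ..
  have i: "norm (w - x n) \<le> (1/2) * norm (x0 - xbar)" for n
  proof -
    have "(norm (w - x n))\<^sup>2 \<le> ((1/2) * norm (x0 - xbar))\<^sup>2"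
      using ball_ident[of x0 xbar "x n"] key[of n] unfolding w_def by (simp add: power_divide)
    then show ?thesis by (rule power2_le_imp_le) simp
  qed
  have ii: "(norm (x n - xbar))\<^sup>2 \<le> b n" for n
    using three_ident[of x0 xbar "x n"] key[of n] unfolding bn
    by (simp add: norm_minus_commute)
  have ii': "b n \<ge> 0" for n using ii[of n] by (meson order_trans zero_le_power2)
  have iii: "(\<forall>n. b (Suc n) \<le> b n) \<and>
          (\<forall>n\<ge>1. x (n - 1) \<noteq> x n \<longrightarrow>
              (norm (xbar - x n))\<^sup>2 < (norm (x0 - xbar))\<^sup>2 - (norm (x0 - x (n - 1)))\<^sup>2
              \<and> b n < b (n - 1))"
    if H: "\<forall>n\<ge>1. x n \<in> halfsp x0 (x (n - 1))"
  proof -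
    have step: "(norm (x (Suc m) - x0))\<^sup>2 \<ge> (norm (x m - x0))\<^sup>2 + (norm (x (Suc m) - x m))\<^sup>2" for m
    proof -
      have "inner (x (Suc m) - x m) (x0 - x m) \<le> 0" using H[rule_format, of "Suc m"] by (simp add: halfsp_def)
      then show ?thesis using three_ident[of "x (Suc m)" x0 "x m"] by (simp add: norm_minus_commute inner_commute)
    qed
    show ?thesis
    proof (intro conjI allI impI)
      fix n show "b (Suc n) \<le> b n" unfolding bn using step[of n] zero_le_power2[of "norm (x (Suc n) - x n)"] by linarith
    next
      fix n :: nat assume "n \<ge> 1" "x (n - 1) \<noteq> x n"
      then obtain m where m: "n = Suc m" by (cases n) auto
      have "x (Suc m) - x m \<noteq> 0" using \<open>x (n - 1) \<noteq> x n\<close> m by simp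
      then have "(norm (x (Suc m) - x m))\<^sup>2 > 0" by simp
      then have lt: "(norm (x m - x0))\<^sup>2 < (norm (x (Suc m) - x0))\<^sup>2" using step[of m] by linarith
      show "b n < b (n - 1)" unfolding bn m using lt by simp
      show "(norm (xbar - x n))\<^sup>2 < (norm (x0 - xbar))\<^sup>2 - (norm (x0 - x (n - 1)))\<^sup>2"
        using ii[of n] lt unfolding bn m by (simp add: norm_minus_commute)
    qed
  qed
  show ?thesis using i ii ii' iii by blast
qed

end
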